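(* Suppose there are at least three states ($n\ge3$). If an updating rule respects the Blackwell order for a prior $\mu$ in the relative interior of $\Delta$ and its distortion function $\varphi=\varphi^{\mu}$ produces a contractive error but does not produce an expansive error, then $\varphi$ is occasionally stubborn.
   Context: Let $\Theta$ be a finite set of states, $|\Theta|=n$, and $\Delta=\Delta(\Theta)$ the simplex of beliefs, viewed in $\mathbb{R}^{n-1}$. An experiment $\pi:\Theta\to\Delta(S)$ ($S$ finite) with prior $\mu$ induces the Bayesian distribution over posteriors $\rho_B$, a finitely supported distribution on $\Delta$ with mean $\mu$ (every such distribution arises from some experiment). Blackwell order: $\pi\succeq\pi'$ iff $\rho_B'$ is a mean-preserving contraction of $\rho_B$. An updating rule is given, for each prior $\mu$, by a distortion function $\varphi^{\mu}:\Delta\to\Delta$: when the Bayesian posterior is $x$, the decision maker holds belief $\varphi^{\mu}(x)$. For a compact action set $A$, continuous $u:A\times\Theta\to\mathbb{R}$, and consistent choice $a^*:\Delta\to A$ (i.e. $a^*(y)\in\arg\max_{a}\mathbb{E}_y u(a,\theta)$ for all $y$), let $W(x)=\mathbb{E}_x u(a^*(\varphi^{\mu}(x)),\theta)$. The rule respects the Blackwell order for $\mu$ if for all such $A,u,a^*$ and all $\pi\succeq\pi'$, $\mathbb{E}_{\rho_B}W\ge\mathbb{E}_{\rho_B'}W$. For $x,y\in\Delta$, $\ell(x,y)$ is the closed segment between them and $\ell^{\circ}(x,y)=\ell(x,y)\setminus\{x,y\}$. $\varphi$ has an expansive error at $x$ if $\varphi(x)\notin\ell(x,\mu)$, and a contractive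 error at $x$ if $\varphi(x)\in\ell(x,\mu)$ and $\varphi(x)\ne x$; $\varphi$ produces an expansive (contractive) error if it has one at some $x$. Faces of $\Delta$ include vertices, edges, and $\Delta$ itself. Let $\hat{\mathcal E}$ be the set of vertices $e$ with $\varphi(e)\neq e$, and $\hat{\mathcal S}$ the set of faces containing some $x$ with $\varphi(x)\ne x$; $\hat{\mathcal S}_m$ denotes its $m$-dimensional members. $\varphi$ is occasionally stubborn if either $\varphi(x)=x$ for all $x$, or there is a single $x^*\in\Delta$ such that: (i) for every $S\in\hat{\mathcal S}$ of dimension $\ge2$, $\varphi(x)=x^*$ for all $x$ in the relative interior of $S$; (ii) for every edge $S\in\hat{\mathcal S}_1$, $\varphi(x)=x^*$ for all $x$ in the relative interior of $S$, except that if $x^*$ lies in the relative interior of an edge $S_1'\in\hat{\mathcal S}_1$, then $S_1'$ may instead satisfy: there is a vertex $e'$ of $S_1'$ with $\varphi(x)=x^*$ for all $x\in\ell^{\circ}(e',x^* )$ and $\varphi(x)=x$ for all $x\in S_1'\setminus\ell^{\circ}(e',x^* )$; (iii) $\varphi(e)\in\ell(x^*,e)$ for every $e\in\hat{\mathcal E}$. *)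

theory Defs
  imports "HOL-Analysis.Analysis" "HOL-Probability.Probability"
begin

definition belief_simplex :: "(real ^ 'n::finite) set" where
  "belief_simplex = {x. (\<forall>i. 0 \<le> x $ i) \<and> (\<Sum>i\<in>UNIV. x $ i) = 1}"

definition prior_pmf :: "real ^ 'n::finite \<Rightarrow> 'n pmf" where
  "prior_pmf \<mu> = embed_pmf (\<lambda>\<theta>. \<mu> $ \<theta>)"

definition is_experiment :: "('n::finite \<Rightarrow> nat pmf) \<Rightarrow> bool" where
  "is_experiment \<pi> \<longleftrightarrow> finite (\<Union>\<theta>. set_pmf (\<pi> \<theta>))"

definition bayes_dist :: "real ^ 'n::finite \<Rightarrow> ('n \<Rightarrow> nat pmf) \<Rightarrow> (real ^ 'n) pmf" where
  "bayes_dist \<mu> \<pi> =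
     map_pmf (\<lambda>s. \<chi> \<theta>. \<mu> $ \<theta> * pmf (\<pi> \<theta>) s / (\<Sum>\<theta>'\<in>UNIV. \<mu> $ \<theta>' * pmf (\<pi> \<theta>') s))
             (bind_pmf (prior_pmf \<mu>) \<pi>)"

definition mean_pmf :: "(real ^ 'n::finite) pmf \<Rightarrow> real ^ 'n" where
  "mean_pmf p = measure_pmf.expectation p (\<lambda>x. x)"

definition mpc :: "(real ^ 'n::finite) pmf \<Rightarrow> (real ^ 'n) pmf \<Rightarrow> bool" where
  "mpc \<rho>' \<rho> \<longleftrightarrow> (\<exists>K. \<rho> = bind_pmf \<rho>' K \<and> (\<forall>y\<in>set_pmf \<rho>'. mean_pmf (K y) = y))"

definition blackwell_ge :: "real ^ 'n::finite \<Rightarrow> ('n \<Rightarrow> nat pmf) \<Rightarrow> ('n \<Rightarrow> nat pmf) \<Rightarrow> bool" where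
  "blackwell_ge \<mu> \<pi> \<pi>' \<longleftrightarrow> mpc (bayes_dist \<mu> \<pi>') (bayes_dist \<mu> \<pi>)"

definition exp_util :: "real ^ 'n::finite \<Rightarrow> ('a \<Rightarrow> 'n \<Rightarrow> real) \<Rightarrow> 'a \<Rightarrow> real" where
  "exp_util y u a = (\<Sum>\<theta>\<in>UNIV. y $ \<theta> * u a \<theta>)"

definition consistent_choice ::
  "'a set \<Rightarrow> ('a \<Rightarrow> 'n::finite \<Rightarrow> real) \<Rightarrow> (real ^ 'n \<Rightarrow> 'a) \<Rightarrow> bool" where
  "consistent_choice A u astar \<longleftrightarrow>
     (\<forall>y\<in>belief_simplex. astar y \<in> A \<and> (\<forall>a\<in>A. exp_util y u a \<le> exp_util y u (astar y)))"

definition respects_blackwell :: "real ^ 'n::finite \<Rightarrow> (real ^ 'n \<Rightarrow> real ^ 'n) \<Rightarrow> bool" where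
  "respects_blackwell \<mu> \<phi> \<longleftrightarrow>
     (\<forall>(A :: (real ^ 'n) set) u astar.
        compact A \<and> A \<noteq> {} \<and> (\<forall>\<theta>. continuous_on A (\<lambda>a. u a \<theta>)) \<and>
        consistent_choice A u astar \<longrightarrow>
        (\<forall>\<pi> \<pi>'. is_experiment \<pi> \<and> is_experiment \<pi>' \<and> blackwell_ge \<mu> \<pi> \<pi>' \<longrightarrow>
           measure_pmf.expectation (bayes_dist \<mu> \<pi>') (\<lambda>x. exp_util x u (astar (\<phi> x)))
           \<le> measure_pmf.expectation (bayes_dist \<mu> \<pi>) (\<lambda>x. exp_util x u (astar (\<phi> x)))))"

definition expansive_error_at :: "real ^ 'n::finite \<Rightarrow> (real ^ 'n \<Rightarrow> real ^ 'n) \<Rightarrow> real ^ 'n \<Rightarrow> bool" where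
  "expansive_error_at \<mu> \<phi> x \<longleftrightarrow> \<phi> x \<notin> closed_segment x \<mu>"

definition contractive_error_at :: "real ^ 'n::finite \<Rightarrow> (real ^ 'n \<Rightarrow> real ^ 'n) \<Rightarrow> real ^ 'n \<Rightarrow> bool" where
  "contractive_error_at \<mu> \<phi> x \<longleftrightarrow> \<phi> x \<in> closed_segment x \<mu> \<and> \<phi> x \<noteq> x"

definition produces_expansive_error :: "real ^ 'n::finite \<Rightarrow> (real ^ 'n \<Rightarrow> real ^ 'n) \<Rightarrow> bool" where
  "produces_expansive_error \<mu> \<phi> \<longleftrightarrow> (\<exists>x\<in>belief_simplex. expansive_error_at \<mu> \<phi> x)"

definition produces_contractive_error :: "real ^ 'n::finite \<Rightarrow> (real ^ 'n \<Rightarrow> real ^ 'n) \<Rightarrow> bool" where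
  "produces_contractive_error \<mu> \<phi> \<longleftrightarrow> (\<exists>x\<in>belief_simplex. contractive_error_at \<mu> \<phi> x)"

definition S_hat :: "(real ^ 'n::finite \<Rightarrow> real ^ 'n) \<Rightarrow> (real ^ 'n) set set" where
  "S_hat \<phi> = {S. S face_of belief_simplex \<and> S \<noteq> {} \<and> (\<exists>x\<in>S. \<phi> x \<noteq> x)}"

definition E_hat :: "(real ^ 'n::finite \<Rightarrow> real ^ 'n) \<Rightarrow> (real ^ 'n) set" where
  "E_hat \<phi> = {e. e extreme_point_of belief_simplex \<and> \<phi> e \<noteq> e}"

definition occasionally_stubborn :: "(real ^ 'n::finite \<Rightarrow> real ^ 'n) \<Rightarrow> bool" where
  "occasionally_stubborn \<phi> \<longleftrightarrow>
     (\<forall>x\<in>belief_simplex. \<phi> x = x) \<or>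
     (\<exists>xs\<in>belief_simplex.
        (\<forall>S\<in>S_hat \<phi>. aff_dim S \<ge> 2 \<longrightarrow> (\<forall>x\<in>rel_interior S. \<phi> x = xs)) \<and>
        (\<forall>S\<in>S_hat \<phi>. aff_dim S = 1 \<longrightarrow>
           (\<forall>x\<in>rel_interior S. \<phi> x = xs) \<or>
           (xs \<in> rel_interior S \<and>
            (\<exists>e'. e' extreme_point_of S \<and>
                  (\<forall>x\<in>open_segment e' xs. \<phi> x = xs) \<and>
                  (\<forall>x\<in>S - open_segment e' xs. \<phi> x = x)))) \<and>
        (\<forall>e\<in>E_hat \<phi>. \<phi> e \<in> closed_segment xs e))"

end

theory Submission
  imports Defs
begin


definition mkexp :: "real ^ 'n::finite \<Rightarrow> nat pmf \<Rightarrow> (nat \<Rightarrow> real ^ 'n) \<Rightarrow> 'n \<Rightarrow> nat pmf" where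
  "mkexp \<mu> P q = (\<lambda>\<theta>. embed_pmf (\<lambda>s. pmf P s * q s $ \<theta> / \<mu> $ \<theta>))"

lemma mkexp_pmf:
  assumes pos: "\<forall>\<theta>. \<mu>$\<theta> > 0" and qs: "\<forall>s. q s \<in> belief_simplex" and fin: "finite (set_pmf P)"
  and mean: "(\<Sum>s\<in>set_pmf P. pmf P s *\<^sub>R q s) = \<mu>"
  shows "pmf (mkexp \<mu> P q \<theta>) s = pmf P s * q s $ \<theta> / \<mu> $ \<theta>"
proof -
  have nn: "\<And>s. 0 \<le> pmf P s * q s $ \<theta> / \<mu> $ \<theta>" using pos qs
    by (simp add: belief_simplex_def less_imp_le)
  have "(\<integral>\<^sup>+s. ennreal (pmf P s * q s $ \<theta> / \<mu> $ \<theta>) \<partial>count_space UNIV)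
      = (\<Sum>s\<in>set_pmf P. ennreal (pmf P s * q s $ \<theta> / \<mu> $ \<theta>))"
    using fin by (intro nn_integral_count_space') (auto simp: set_pmf_eq)
  also have "\<dots> = ennreal (\<Sum>s\<in>set_pmf P. pmf P s * q s $ \<theta> / \<mu> $ \<theta>)" using nn by simp
  also have "(\<Sum>s\<in>set_pmf P. pmf P s * q s $ \<theta> / \<mu> $ \<theta>) = (\<Sum>s\<in>set_pmf P. pmf P s *\<^sub>R q s) $ \<theta> / \<mu> $ \<theta>"
    by (simp add: sum_divide_distrib)
  also have "\<dots> = 1" using mean pos by (metis less_irrefl divide_self)
  finally have prob: "(\<integral>\<^sup>+s. ennreal (pmf P s * q s $ \<theta> / \<mu> $ \<theta>) \<partial>count_space UNIV) = 1" by simp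
  show ?thesis unfolding mkexp_def using pmf_embed_pmf[OF nn prob] by simp
qed

lemma prior_pmf_pmf:
  assumes "\<mu> \<in> belief_simplex"
  shows "pmf (prior_pmf \<mu>) \<theta> = \<mu> $ \<theta>"
proof -
  have nn: "\<And>t. 0 \<le> \<mu> $ t" using assms by (simp add: belief_simplex_def)
  have "(\<integral>\<^sup>+t. ennreal (\<mu> $ t) \<partial>count_space UNIV) = (\<Sum>t\<in>UNIV. ennreal (\<mu> $ t))"
    by (rule nn_integral_count_space_finite) simp
  also have "\<dots> = 1" using nn assms by (simp add: belief_simplex_def)
  finally have prob: "(\<integral>\<^sup>+t. ennreal (\<mu> $ t) \<partial>count_space UNIV) = 1" .
  show ?thesis unfolding prior_pmf_def using pmf_embed_pmf[OF nn prob] by simp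
qed

lemma mkexp_props:
  assumes pos: "\<forall>\<theta>. \<mu>$\<theta> > 0" and mu: "\<mu> \<in> belief_simplex"
  and qs: "\<forall>s. q s \<in> belief_simplex" and fin: "finite (set_pmf P)"
  and mean: "(\<Sum>s\<in>set_pmf P. pmf P s *\<^sub>R q s) = \<mu>"
  shows "is_experiment (mkexp \<mu> P q)" and "bayes_dist \<mu> (mkexp \<mu> P q) = map_pmf q P"
proof -
  note pm = mkexp_pmf[OF pos qs fin mean]
  have sub: "set_pmf (mkexp \<mu> P q \<theta>) \<subseteq> set_pmf P" for \<theta>
    using pm by (auto simp: set_pmf_eq)
  show "is_experiment (mkexp \<mu> P q)" unfolding is_experiment_def
    using sub fin by (meson UN_least finite_subset)
  have bind: "bind_pmf (prior_pmf \<mu>) (mkexp \<mu> P q) = P"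
  proof (rule pmf_eqI)
    fix s
    have "pmf (bind_pmf (prior_pmf \<mu>) (mkexp \<mu> P q)) s
       = (\<Sum>t\<in>UNIV. pmf (prior_pmf \<mu>) t *\<^sub>R pmf (mkexp \<mu> P q t) s)"
      unfolding pmf_bind by (rule integral_measure_pmf) auto
    also have "\<dots> = (\<Sum>t\<in>UNIV. pmf P s * q s $ t)"
      using pos by (simp add: prior_pmf_pmf[OF mu] pm less_imp_neq[symmetric])
    also have "\<dots> = pmf P s" using qs
      by (simp add: belief_simplex_def sum_distrib_left[symmetric])
    finally show "pmf (bind_pmf (prior_pmf \<mu>) (mkexp \<mu> P q)) s = pmf P s" .
  qed
  show "bayes_dist \<mu> (mkexp \<mu> P q) = map_pmf q P"
    unfolding bayes_dist_def bind
  proof (rule map_pmf_cong[OF refl])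
    fix s assume "s \<in> set_pmf P"
    then have ps: "pmf P s > 0" by (simp add: pmf_positive)
    have den: "(\<Sum>t\<in>UNIV. \<mu> $ t * pmf (mkexp \<mu> P q t) s) = pmf P s"
      using pos qs by (simp add: pm belief_simplex_def less_imp_neq[symmetric] sum_distrib_left[symmetric])
    show "(\<chi> \<theta>. \<mu> $ \<theta> * pmf (mkexp \<mu> P q \<theta>) s / (\<Sum>t\<in>UNIV. \<mu> $ t * pmf (mkexp \<mu> P q t) s)) = q s"
      unfolding den using pos ps by (simp add: pm vec_eq_iff less_imp_neq[symmetric])
  qed
qed


lemma mkexp_props':
  assumes pos: "\<forall>\<theta>. \<mu>$\<theta> > 0" and mu: "\<mu> \<in> belief_simplex"
  and qs: "\<forall>s. q s \<in> belief_simplex" and fin: "finite (set_pmf P)"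
  and mean: "measure_pmf.expectation P q = \<mu>"
  shows "is_experiment (mkexp \<mu> P q)" and "bayes_dist \<mu> (mkexp \<mu> P q) = map_pmf q P"
proof -
  have "measure_pmf.expectation P q = (\<Sum>s\<in>set_pmf P. pmf P s *\<^sub>R q s)"
    using fin by (intro integral_measure_pmf) auto
  then have m: "(\<Sum>s\<in>set_pmf P. pmf P s *\<^sub>R q s) = \<mu>" using mean by simp
  show "is_experiment (mkexp \<mu> P q)" and "bayes_dist \<mu> (mkexp \<mu> P q) = map_pmf q P"
    using mkexp_props[OF pos mu qs fin m] by auto
qed

lemma exp_bern:
  fixes f :: "bool \<Rightarrow> 'b::{banach, second_countable_topology}"
  assumes "0 \<le> p" "p \<le> 1"
  shows "measure_pmf.expectation (bernoulli_pmf p) f = p *\<^sub>R f True + (1 - p) *\<^sub>R f False"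
proof -
  have "measure_pmf.expectation (bernoulli_pmf p) f = (\<Sum>b\<in>UNIV. pmf (bernoulli_pmf p) b *\<^sub>R f b)"
    by (intro integral_measure_pmf) auto
  then show ?thesis using assms by (simp add: UNIV_bool)
qed

lemma exp_bind_bern:
  fixes f :: "nat \<Rightarrow> 'b::{banach, second_countable_topology}"
  assumes "0 \<le> p" "p \<le> 1" "\<And>b. finite (set_pmf (K b))"
  shows "measure_pmf.expectation (bind_pmf (bernoulli_pmf p) K) f
     = p *\<^sub>R measure_pmf.expectation (K True) f + (1 - p) *\<^sub>R measure_pmf.expectation (K False) f"
proof -
  have "measure_pmf.expectation (bind_pmf (bernoulli_pmf p) K) f
     = (\<Sum>b\<in>UNIV. pmf (bernoulli_pmf p) b *\<^sub>R measure_pmf.expectation (K b) f)"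
    using assms by (intro pmf_expectation_bind) auto
  then show ?thesis using assms by (simp add: UNIV_bool)
qed

lemma mu_min:
  fixes \<mu> :: "real ^ 'n::finite"
  assumes pos: "\<forall>\<theta>. \<mu>$\<theta> > 0" and mu: "\<mu> \<in> belief_simplex"
  obtains p where "0 < p" "p < 1" "\<And>i. p \<le> \<mu> $ i"
proof -
  define m where "m = Min (range (\<lambda>i. \<mu> $ i))"
  have fin: "finite (range (\<lambda>i. \<mu> $ i))" by simp
  have mle: "m \<le> \<mu> $ i" for i unfolding m_def by (rule Min_le[OF fin]) auto
  have "m \<in> range (\<lambda>i. \<mu> $ i)" unfolding m_def by (rule Min_in[OF fin]) auto
  then have mpos: "m > 0" using pos by auto
  have le1: "\<mu> $ i \<le> 1" for i
  proof -
    have "\<mu> $ i \<le> (\<Sum>j\<in>UNIV. \<mu> $ j)"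
      using pos by (intro member_le_sum) (auto simp: less_imp_le)
    then show ?thesis using mu by (simp add: belief_simplex_def)
  qed
  show ?thesis
  proof (rule that[of "m/2"])
    show "0 < m/2" using mpos by simp
    show "m/2 < 1" using mle[of undefined] le1[of undefined] by simp
    show "m/2 \<le> \<mu> $ i" for i using mle[of i] mpos by simp
  qed
qed

lemma simplex_le1:
  assumes "x \<in> belief_simplex" shows "x $ i \<le> 1"
proof -
  have "x $ i \<le> (\<Sum>j\<in>UNIV. x $ j)"
    using assms by (intro member_le_sum) (auto simp: belief_simplex_def)
  then show ?thesis using assms by (simp add: belief_simplex_def)
qed

lemma simplex_comb:
  assumes "x \<in> belief_simplex" "y \<in> belief_simplex" "0 \<le> a" "a \<le> 1"
  shows "a *\<^sub>R x + (1 - a) *\<^sub>R y \<in> belief_simplex"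
  using assms by (auto simp: belief_simplex_def sum.distrib sum_distrib_left[symmetric])



lemma exp_bern_map:
  fixes f :: "nat \<Rightarrow> 'b::{banach, second_countable_topology}"
  assumes "0 \<le> a" "a \<le> 1"
  shows "measure_pmf.expectation (if (0::nat) = 0 then map_pmf (\<lambda>b. if b then 0 else 2::nat) (bernoulli_pmf a) else return_pmf 0) f
     = a *\<^sub>R f 0 + (1 - a) *\<^sub>R f 2"
  using assms by (simp add: exp_bern)

lemma blackwell_convex:
  fixes \<mu> :: "real ^ 'n::finite" and A :: "(real ^ 'n) set"
  assumes pos: "\<forall>\<theta>. \<mu>$\<theta> > 0" and mu: "\<mu> \<in> belief_simplex"
    and RB: "respects_blackwell \<mu> \<phi>"
    and A: "compact A" "A \<noteq> {}" "\<forall>\<theta>. continuous_on A (\<lambda>a. u a \<theta>)" "consistent_choice A u astar"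
    and xyz: "x \<in> belief_simplex" "y \<in> belief_simplex" "z \<in> belief_simplex"
    and xmu: "x \<noteq> \<mu>" and a: "0 \<le> a" "a \<le> 1" and xe: "x = a *\<^sub>R y + (1 - a) *\<^sub>R z"
  shows "exp_util x u (astar (\<phi> x)) \<le> a * exp_util y u (astar (\<phi> y)) + (1 - a) * exp_util z u (astar (\<phi> z))"
proof -
  define W where "W v = exp_util v u (astar (\<phi> v))" for v
  obtain p where p: "0 < p" "p < 1" "\<And>i. p \<le> \<mu> $ i" using mu_min[OF pos mu] by blast
  define w where "w = (1 / (1 - p)) *\<^sub>R (\<mu> - p *\<^sub>R x)"
  have w: "w \<in> belief_simplex"
  proof -
    have "0 \<le> w $ i" for i
    proof -
      have "p * x $ i \<le> p" using simplex_le1[OF xyz(1)] p by (simp add: mult_left_le)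
      then have "p * x $ i \<le> \<mu> $ i" using p(3)[of i] by linarith
      then show ?thesis using p unfolding w_def by simp
    qed
    moreover have "(\<Sum>i\<in>UNIV. w $ i) = 1"
      using mu xyz(1) p unfolding w_def
      by (simp add: belief_simplex_def sum_divide_distrib[symmetric] sum_distrib_left[symmetric] sum_subtractf)
    ultimately show ?thesis by (simp add: belief_simplex_def)
  qed
  have mueq: "p *\<^sub>R x + (1 - p) *\<^sub>R w = \<mu>"
  proof -
    have "(1 - p) *\<^sub>R w = \<mu> - p *\<^sub>R x" using p unfolding w_def by simp
    then show ?thesis by simp
  qed
  have wx: "w \<noteq> x"
  proof
    assume "w = x" then have "\<mu> = x" using mueq by (simp add: algebra_simps)
    then show False using xmu by simp
  qed
  define c2 where "c2 b = (if b then 0 else 1::nat)" for b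
  define c3 where "c3 b = (if b then 0 else 2::nat)" for b
  define P' where "P' = map_pmf c2 (bernoulli_pmf p)"
  define K0 where "K0 (s::nat) = (if s = 0 then map_pmf c3 (bernoulli_pmf a) else return_pmf s)" for s
  define P where "P = bind_pmf P' K0"
  define q' where "q' (s::nat) = (if s = 0 then x else if s = 1 then w else \<mu>)" for s
  define q where "q (s::nat) = (if s = 0 then y else if s = 1 then w else if s = 2 then z else \<mu>)" for s
  have P: "P = bind_pmf (bernoulli_pmf p) (\<lambda>b. K0 (c2 b))"
    unfolding P_def P'_def bind_map_pmf ..
  have q's: "\<forall>s. q' s \<in> belief_simplex" using xyz w mu by (simp add: q'_def)
  have qs: "\<forall>s. q s \<in> belief_simplex" using xyz w mu by (simp add: q_def)
  have finP': "finite (set_pmf P')" unfolding P'_def by simp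
  have finK0: "finite (set_pmf (K0 s))" for s unfolding K0_def by simp
  have finP: "finite (set_pmf P)" unfolding P_def using finP' finK0 by (simp add: set_bind_pmf)
  have pp: "0 \<le> p" "p \<le> 1" using p by auto
  have EK0: "measure_pmf.expectation (K0 0) f = a *\<^sub>R f 0 + (1 - a) *\<^sub>R f 2" for f :: "nat \<Rightarrow> real ^ 'n"
    unfolding K0_def c3_def using a by (simp add: exp_bern)
  have EK0r: "measure_pmf.expectation (K0 0) f = a *\<^sub>R f 0 + (1 - a) *\<^sub>R f 2" for f :: "nat \<Rightarrow> real"
    unfolding K0_def c3_def using a by (simp add: exp_bern)
  have mean': "measure_pmf.expectation P' q' = \<mu>"
    unfolding P'_def using pp mueq by (simp add: exp_bern c2_def q'_def)
  have K01: "K0 (Suc 0) = return_pmf 1" by (simp add: K0_def)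
  have mean: "measure_pmf.expectation P q = \<mu>"
    unfolding P using pp mueq finK0 xe by (simp add: exp_bind_bern EK0 c2_def q_def K01)
  define \<pi>' where "\<pi>' = mkexp \<mu> P' q'"
  define \<pi> where "\<pi> = mkexp \<mu> P q"
  note E' = mkexp_props'[OF pos mu q's finP' mean', folded \<pi>'_def]
  note E = mkexp_props'[OF pos mu qs finP mean, folded \<pi>_def]
  define K where "K v = (if v = x then map_pmf q (K0 0) else return_pmf v)" for v
  have bw: "blackwell_ge \<mu> \<pi> \<pi>'"
    unfolding blackwell_ge_def mpc_def E(2) E'(2)
  proof (intro exI conjI ballI)
    show "map_pmf q P = map_pmf q' P' \<bind> K"
      unfolding P_def map_bind_pmf bind_map_pmf
    proof (rule bind_pmf_cong[OF refl])
      fix s assume "s \<in> set_pmf P'"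
      then have "s = 0 \<or> s = 1" unfolding P'_def c2_def by auto
      then show "map_pmf q (K0 s) = K (q' s)"
        using wx by (auto simp: K_def q'_def K0_def q_def)
    qed
    fix v assume "v \<in> set_pmf (map_pmf q' P')"
    show "mean_pmf (K v) = v"
    proof (cases "v = x")
      case True
      then show ?thesis unfolding mean_pmf_def K_def using xe by (simp add: EK0 q_def)
    next
      case False
      then show ?thesis unfolding mean_pmf_def K_def by simp
    qed
  qed
  have "measure_pmf.expectation (bayes_dist \<mu> \<pi>') W \<le> measure_pmf.expectation (bayes_dist \<mu> \<pi>) W"
    using RB A E(1) E'(1) bw unfolding respects_blackwell_def W_def by blast
  moreover have "measure_pmf.expectation (bayes_dist \<mu> \<pi>') W = p * W x + (1 - p) * W w"
    unfolding E'(2) P'_def using pp by (simp add: exp_bern c2_def q'_def)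
  moreover have "measure_pmf.expectation (bayes_dist \<mu> \<pi>) W = p * (a * W y + (1 - a) * W z) + (1 - p) * W w"
    unfolding E(2) P using pp finK0 by (simp add: exp_bind_bern EK0r c2_def q_def K01)
  ultimately have "p * W x \<le> p * (a * W y + (1 - a) * W z)" by simp
  then show ?thesis using p unfolding W_def by simp
qed



definition one_vec :: "real ^ 'n::finite" where "one_vec = (\<chi> i. 1)"

lemma status:
  fixes \<mu> :: "real ^ 'n::finite"
  assumes pos: "\<forall>\<theta>. \<mu>$\<theta> > 0" and mu: "\<mu> \<in> belief_simplex"
    and RB: "respects_blackwell \<mu> \<phi>"
    and prq: "p \<in> belief_simplex" "q \<in> belief_simplex" "r \<in> belief_simplex"
    and rmu: "r \<noteq> \<mu>" and a: "0 \<le> a" "a < 1" and re: "r = a *\<^sub>R p + (1 - a) *\<^sub>R q"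
    and cp: "c \<bullet> p \<ge> 0" and cq: "c \<bullet> q > 0" and cr: "c \<bullet> \<phi> r \<ge> 0"
  shows "c \<bullet> \<phi> q \<ge> 0"
proof (rule ccontr)
  assume neg: "\<not> c \<bullet> \<phi> q \<ge> 0"
  define A :: "(real ^ 'n) set" where "A = {0, one_vec}"
  define u where "u (b :: real ^ 'n) \<theta> = b $ undefined * c $ \<theta>" for b \<theta>
  define astar where "astar y = (if c \<bullet> y \<ge> 0 then one_vec else (0 :: real ^ 'n))" for y :: "real ^ 'n"
  have eu1: "exp_util y u one_vec = c \<bullet> y" for y
    unfolding exp_util_def u_def one_vec_def inner_vec_def by (simp add: mult.commute)
  have eu0: "exp_util y u 0 = 0" for y
    unfolding exp_util_def u_def by simp
  have cA: "compact A" unfolding A_def by (intro finite_imp_compact) simp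
  have neA: "A \<noteq> {}" unfolding A_def by simp
  have contA: "\<forall>\<theta>. continuous_on A (\<lambda>b. u b \<theta>)" unfolding u_def by (intro allI continuous_intros)
  have cc: "consistent_choice A u astar"
    unfolding consistent_choice_def A_def astar_def using eu1 eu0 by auto
  define W where "W v = exp_util v u (astar (\<phi> v))" for v
  have Wv: "W v = (if c \<bullet> \<phi> v \<ge> 0 then c \<bullet> v else 0)" for v
    unfolding W_def astar_def using eu1 eu0 by simp
  have "W r \<le> a * W p + (1 - a) * W q"
    using blackwell_convex[OF pos mu RB cA neA contA cc prq(3) prq(1) prq(2) rmu a(1) _ re] a
    unfolding W_def by simp
  moreover have "W q = 0" using neg Wv by simp
  moreover have "a * W p \<le> a * (c \<bullet> p)" using Wv cp a by (intro mult_left_mono) auto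
  moreover have "W r = a * (c \<bullet> p) + (1 - a) * (c \<bullet> q)" using Wv cr re by (simp add: inner_add_right)
  ultimately have "(1 - a) * (c \<bullet> q) \<le> 0" by (simp only: mult_zero_right add_0_right)
  moreover have "(1 - a) * (c \<bullet> q) > 0" using a cq by simp
  ultimately show False by simp
qed


lemma one_vec_inner: "z \<in> belief_simplex \<Longrightarrow> one_vec \<bullet> z = 1"
  unfolding one_vec_def inner_vec_def belief_simplex_def by simp

lemma key:
  fixes \<mu> :: "real ^ 'n::finite"
  assumes pos: "\<forall>\<theta>. \<mu>$\<theta> > 0" and mu: "\<mu> \<in> belief_simplex"
    and RB: "respects_blackwell \<mu> \<phi>"
    and noexp: "\<forall>x\<in>belief_simplex. \<phi> x \<in> closed_segment x \<mu>"
    and F: "F \<subseteq> belief_simplex" and x0: "x0 \<in> F" and y: "y \<in> rel_interior F"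
    and nf: "\<phi> x0 \<noteq> x0" and ncol: "\<forall>k. y - \<mu> \<noteq> k *\<^sub>R (x0 - \<mu>)"
  shows "\<phi> y = \<mu>"
proof (rule ccontr)
  assume ny: "\<phi> y \<noteq> \<mu>"
  have yF: "y \<in> F" using y rel_interior_subset by blast
  have x0S: "x0 \<in> belief_simplex" and yS: "y \<in> belief_simplex" using x0 yF F by auto
  obtain t where t: "0 \<le> t" "t \<le> 1" "\<phi> x0 = (1 - t) *\<^sub>R x0 + t *\<^sub>R \<mu>"
    using noexp x0S by (auto simp: in_segment)
  have t0: "t > 0" using t nf by (cases "t = 0") auto
  obtain s where s: "0 \<le> s" "s \<le> 1" "\<phi> y = (1 - s) *\<^sub>R y + s *\<^sub>R \<mu>"
    using noexp yS by (auto simp: in_segment)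
  have s1: "s < 1" using s ny by (cases "s = 1") auto
  have ymu: "y \<noteq> \<mu>"
  proof
    assume "y = \<mu>" then show False using ny noexp[rule_format, OF mu] by simp
  qed
  define u where "u = x0 - \<mu>"
  define v where "v = y - \<mu>"
  have u0: "u \<noteq> 0"
  proof
    assume "u = 0" then have "x0 = \<mu>" unfolding u_def by simp
    then show False using nf noexp[rule_format, OF mu] by simp
  qed
  then have uu: "u \<bullet> u > 0" by simp
  define v' where "v' = v - ((u \<bullet> v) / (u \<bullet> u)) *\<^sub>R u"
  have v'0: "v' \<noteq> 0" using ncol unfolding v'_def v_def u_def by (metis eq_iff_diff_eq_0)
  then have vv: "v' \<bullet> v' > 0" by simp
  have v'u: "v' \<bullet> u = 0" unfolding v'_def using uu by (simp add: inner_diff_left inner_commute[of v u])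
  have v'v: "v' \<bullet> v = v' \<bullet> v'"
  proof -
    have "v = v' + ((u \<bullet> v) / (u \<bullet> u)) *\<^sub>R u" unfolding v'_def by simp
    then have "v' \<bullet> v = v' \<bullet> v' + ((u \<bullet> v) / (u \<bullet> u)) * (v' \<bullet> u)"
      by (metis inner_add_right inner_scaleR_right)
    then show ?thesis using v'u by simp
  qed
  define K where "K = 1 / (1 - s)"
  define g where "g = (K - (u \<bullet> v) / (u \<bullet> u)) / (v' \<bullet> v')"
  define c0 where "c0 = (1 / (u \<bullet> u)) *\<^sub>R u + g *\<^sub>R v'"
  have c0u: "c0 \<bullet> u = 1" unfolding c0_def using uu v'u
    by (simp add: inner_add_left inner_add_right inner_commute)
  have c0v: "c0 \<bullet> v = K" unfolding c0_def g_def using uu vv v'v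
    by (simp add: inner_add_left inner_add_right inner_commute)
  define d where "d = 1 - t / 2"
  define c where "c = c0 - (c0 \<bullet> \<mu> + d) *\<^sub>R one_vec"
  have cz: "c \<bullet> z = c0 \<bullet> (z - \<mu>) - d" if "z \<in> belief_simplex" for z
    unfolding c_def using one_vec_inner[OF that]
    by (simp add: inner_diff_left inner_diff_right inner_commute)
  have phx: "\<phi> x0 - \<mu> = (1 - t) *\<^sub>R u" unfolding u_def t(3) by (simp add: algebra_simps)
  have phy: "\<phi> y - \<mu> = (1 - s) *\<^sub>R v" unfolding v_def s(3) by (simp add: algebra_simps)
  have phxS: "\<phi> x0 \<in> belief_simplex" and phyS: "\<phi> y \<in> belief_simplex"
    using simplex_comb[OF x0S mu, of "1 - t"] simplex_comb[OF yS mu, of "1 - s"] t s by auto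
  have cx0: "c \<bullet> x0 = t / 2" using cz[OF x0S] c0u unfolding u_def d_def by simp
  have cphx: "c \<bullet> \<phi> x0 = - t / 2" using cz[OF phxS] c0u phx unfolding d_def
    by (simp add: algebra_simps)
  have K1: "K \<ge> 1" unfolding K_def using s s1 by simp
  have cy: "c \<bullet> y > 0" using cz[OF yS] c0v K1 t0 unfolding v_def d_def by simp
  have cphy: "c \<bullet> \<phi> y \<ge> 0" using cz[OF phyS] c0v phy s1 t unfolding d_def K_def
    by simp
  obtain e where e: "e > 0" "cball y e \<inter> affine hull F \<subseteq> F"
    using y by (auto simp: mem_rel_interior_cball)
  define \<epsilon> where "\<epsilon> = min (e / (norm (y - x0) + 1)) ((c \<bullet> y) / (c \<bullet> x0))"
  have "norm (y - x0) + 1 > 0" by (simp add: add_nonneg_pos)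
  then have \<epsilon>0: "\<epsilon> > 0" unfolding \<epsilon>_def using e cy cx0 t0 by simp
  define p where "p = (1 + \<epsilon>) *\<^sub>R y + (- \<epsilon>) *\<^sub>R x0"
  have "p \<in> affine hull F"
    unfolding p_def by (rule mem_affine[OF affine_affine_hull]) (use yF x0 hull_inc in auto)
  moreover have "p \<in> cball y e"
  proof -
    have "dist y p = \<epsilon> * norm (y - x0)" unfolding p_def dist_norm using \<epsilon>0
      by (simp add: algebra_simps flip: scaleR_diff_right)
    also have "\<dots> \<le> e / (norm (y - x0) + 1) * norm (y - x0)"
      unfolding \<epsilon>_def by (intro mult_right_mono) auto
    also have "\<dots> \<le> e"
    proof -
      have pz: "norm (y - x0) + 1 > 0" by (simp add: add_nonneg_pos)
      have "norm (y - x0) / (norm (y - x0) + 1) \<le> 1" using pz by (simp add: divide_le_eq)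
      then have "e * (norm (y - x0) / (norm (y - x0) + 1)) \<le> e * 1" using e by (intro mult_left_mono) auto
      then show ?thesis by simp
    qed
    finally show ?thesis by simp
  qed
  ultimately have pF: "p \<in> F" using e by blast
  have cp: "c \<bullet> p \<ge> 0"
  proof -
    have cx0p: "c \<bullet> x0 > 0" using cx0 t0 by simp
    have "\<epsilon> \<le> (c \<bullet> y) / (c \<bullet> x0)" unfolding \<epsilon>_def by simp
    then have "\<epsilon> * (c \<bullet> x0) \<le> (c \<bullet> y) / (c \<bullet> x0) * (c \<bullet> x0)"
      using cx0p by (intro mult_right_mono) auto
    then have "\<epsilon> * (c \<bullet> x0) \<le> c \<bullet> y" using cx0p by simp
    moreover have "\<epsilon> * (c \<bullet> y) \<ge> 0" using \<epsilon>0 cy by simp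
    ultimately show ?thesis unfolding p_def by (simp add: inner_add_right algebra_simps)
  qed
  define a where "a = 1 / (1 + \<epsilon>)"
  have a: "0 \<le> a" "a < 1" unfolding a_def using \<epsilon>0 by auto
  have ye: "y = a *\<^sub>R p + (1 - a) *\<^sub>R x0"
  proof -
    have a1: "a * (1 + \<epsilon>) = 1" unfolding a_def using \<epsilon>0 by simp
    have "a *\<^sub>R p + (1 - a) *\<^sub>R x0 = (a * (1 + \<epsilon>)) *\<^sub>R y + (1 - a * (1 + \<epsilon>)) *\<^sub>R x0"
      unfolding p_def by (simp add: algebra_simps)
    then show ?thesis using a1 by simp
  qed
  have "c \<bullet> \<phi> x0 \<ge> 0"
    by (rule status[OF pos mu RB _ x0S yS ymu a ye cp _ cphy]) (use pF F cx0 t0 in auto)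
  then show False using cphx t0 by simp
qed



lemma axis_simplex: "axis i 1 \<in> (belief_simplex :: (real ^ 'n::finite) set)"
  unfolding belief_simplex_def axis_def by simp

lemma convex_simplex: "convex (belief_simplex :: (real ^ 'n::finite) set)"
proof (rule convexI)
  fix x y :: "real ^ 'n" and u v :: real
  assume "x \<in> belief_simplex" "y \<in> belief_simplex" "0 \<le> u" "0 \<le> v" "u + v = 1"
  then show "u *\<^sub>R x + v *\<^sub>R y \<in> belief_simplex"
    using simplex_comb[of x y u] by (simp add: eq_diff_eq[symmetric])
qed

lemma mu_pos:
  fixes \<mu> :: "real ^ 'n::finite"
  assumes mu: "\<mu> \<in> rel_interior belief_simplex"
  shows "\<forall>\<theta>. \<mu> $ \<theta> > 0"
proof
  fix i
  have muS: "\<mu> \<in> belief_simplex" using mu rel_interior_subset by blast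
  obtain e where e: "e > 0" "cball \<mu> e \<inter> affine hull belief_simplex \<subseteq> belief_simplex"
    using mu by (auto simp: mem_rel_interior_cball)
  show "\<mu> $ i > 0"
  proof (rule ccontr)
    assume "\<not> \<mu> $ i > 0"
    then have mi: "\<mu> $ i = 0" using muS by (simp add: belief_simplex_def not_less order_antisym)
    define ei :: "real ^ 'n" where "ei = axis i 1"
    have pz: "norm (\<mu> - ei) + 1 > 0" by (simp add: add_nonneg_pos)
    define k where "k = e / (norm (\<mu> - ei) + 1)"
    have k0: "k > 0" unfolding k_def using e pz by simp
    define z where "z = (1 + k) *\<^sub>R \<mu> + (- k) *\<^sub>R ei"
    have "z \<in> affine hull belief_simplex"
      unfolding z_def by (rule mem_affine[OF affine_affine_hull]) (use muS hull_inc[OF axis_simplex] ei_def hull_inc in auto)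
    moreover have "z \<in> cball \<mu> e"
    proof -
      have "dist \<mu> z = k * norm (\<mu> - ei)" unfolding z_def dist_norm using k0
        by (simp add: algebra_simps flip: scaleR_diff_right)
      also have "\<dots> \<le> e"
      proof -
        have "norm (\<mu> - ei) / (norm (\<mu> - ei) + 1) \<le> 1" using pz by (simp add: divide_le_eq)
        then have "e * (norm (\<mu> - ei) / (norm (\<mu> - ei) + 1)) \<le> e * 1" using e by (intro mult_left_mono) auto
        then show ?thesis unfolding k_def by simp
      qed
      finally show ?thesis by simp
    qed
    ultimately have "z \<in> belief_simplex" using e by blast
    moreover have "z $ i = - k" unfolding z_def ei_def using mi by (simp add: axis_def)
    ultimately show False using k0 by (auto simp: belief_simplex_def dest: spec[of _ i])
  qed
qed

lemma three_idx:
  fixes dummy :: "'n::finite"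
  assumes "CARD('n) \<ge> 3"
  obtains i j k :: 'n where "i \<noteq> j" "j \<noteq> k" "i \<noteq> k"
proof -
  obtain T :: "'n set" where "card T = 3" using obtain_subset_with_card_n[OF assms] by blast
  then obtain a b c :: 'n where "a \<noteq> b" "b \<noteq> c" "a \<noteq> c" unfolding card_3_iff by blast
  then show ?thesis by (rule that)
qed

lemma ex_ncol:
  fixes \<mu> :: "real ^ 'n::finite"
  assumes card: "CARD('n) \<ge> 3" and mu: "\<mu> \<in> rel_interior belief_simplex"
    and F: "F face_of belief_simplex" and dim: "aff_dim F \<ge> 1" and x0: "x0 \<in> F" and x0mu: "x0 \<noteq> \<mu>"
  shows "\<exists>y1\<in>rel_interior F. \<forall>k. y1 - \<mu> \<noteq> k *\<^sub>R (x0 - \<mu>)"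
proof (rule ccontr)
  assume "\<not> ?thesis"
  then have riL: "\<forall>y\<in>rel_interior F. \<exists>k. y - \<mu> = k *\<^sub>R (x0 - \<mu>)" by blast
  define L where "L = {z. \<exists>k. z - \<mu> = k *\<^sub>R (x0 - \<mu>)}"
  have affL: "affine L" unfolding affine_def
  proof (intro ballI allI impI)
    fix x y :: "real ^ 'n" and u v :: real
    assume x: "x \<in> L" and y: "y \<in> L" and uv: "u + v = 1"
    obtain k1 where k1': "x - \<mu> = k1 *\<^sub>R (x0 - \<mu>)" using x unfolding L_def by blast
    then have k1: "x = \<mu> + k1 *\<^sub>R (x0 - \<mu>)" by (simp add: diff_eq_eq)
    obtain k2 where k2': "y - \<mu> = k2 *\<^sub>R (x0 - \<mu>)" using y unfolding L_def by blast
    then have k2: "y = \<mu> + k2 *\<^sub>R (x0 - \<mu>)" by (simp add: diff_eq_eq)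
    have "u *\<^sub>R x + v *\<^sub>R y - \<mu> = (u + v) *\<^sub>R \<mu> - \<mu> + (u * k1 + v * k2) *\<^sub>R (x0 - \<mu>)"
      unfolding k1 k2 by (simp add: algebra_simps)
    then have "u *\<^sub>R x + v *\<^sub>R y - \<mu> = (u * k1 + v * k2) *\<^sub>R (x0 - \<mu>)" using uv by simp
    then show "u *\<^sub>R x + v *\<^sub>R y \<in> L" unfolding L_def by blast
  qed
  have cF: "convex F" using face_of_imp_convex[OF F] .
  have "affine hull (rel_interior F) \<subseteq> L"
  proof (rule hull_minimal)
    show "rel_interior F \<subseteq> L" using riL unfolding L_def subset_iff mem_Collect_eq by blast
  qed (rule affL)
  then have affFL: "affine hull F \<subseteq> L" using rel_interior_same_affine_hull[OF cF] by simp
  have FL: "F \<subseteq> L" using order_trans[OF hull_subset[of F affine] affFL] .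
  obtain a b where ab: "a \<in> F" "b \<in> F" "a \<noteq> b"
  proof -
    have "F \<noteq> {}"
    proof
      assume "F = {}" then show False using dim by simp
    qed
    then obtain a where a: "a \<in> F" by blast
    have "\<not> F \<subseteq> {a}"
    proof
      assume "F \<subseteq> {a}" then have "F = {a}" using a by blast
      then show False using dim by simp
    qed
    then obtain b where "b \<in> F" "b \<noteq> a" by blast
    then show ?thesis using that a by blast
  qed
  obtain k1 where k1: "a - \<mu> = k1 *\<^sub>R (x0 - \<mu>)" using FL ab(1) unfolding L_def by blast
  obtain k2 where k2: "b - \<mu> = k2 *\<^sub>R (x0 - \<mu>)" using FL ab(2) unfolding L_def by blast
  have k12: "k2 - k1 \<noteq> 0"
  proof
    assume "k2 - k1 = 0" then have "k1 = k2" by simp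
    then have "a - \<mu> = b - \<mu>" using k1 k2 by simp
    then show False using ab(3) by simp
  qed
  have "(k2 / (k2 - k1)) *\<^sub>R a + (- k1 / (k2 - k1)) *\<^sub>R b = \<mu>"
  proof -
    have ea: "a = \<mu> + k1 *\<^sub>R (x0 - \<mu>)" and eb: "b = \<mu> + k2 *\<^sub>R (x0 - \<mu>)" using k1 k2 by (simp_all add: diff_eq_eq)
    have "(k2 - k1) *\<^sub>R ((k2 / (k2 - k1)) *\<^sub>R a + (- k1 / (k2 - k1)) *\<^sub>R b) = k2 *\<^sub>R a - k1 *\<^sub>R b"
      using k12 by (simp add: scaleR_add_right scaleR_diff_right)
    also have "\<dots> = (k2 - k1) *\<^sub>R \<mu>" unfolding ea eb by (simp add: algebra_simps)
    finally show ?thesis using k12 by simp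
  qed
  moreover have "(k2 / (k2 - k1)) *\<^sub>R a + (- k1 / (k2 - k1)) *\<^sub>R b \<in> affine hull F"
  proof (rule mem_affine[OF affine_affine_hull])
    show "a \<in> affine hull F" using ab(1) by (rule hull_inc)
    show "b \<in> affine hull F" using ab(2) by (rule hull_inc)
    have "k2 / (k2 - k1) + - k1 / (k2 - k1) = (k2 + - k1) / (k2 - k1)" by (rule add_divide_distrib[symmetric])
    also have "\<dots> = 1" using k12 by simp
    finally show "k2 / (k2 - k1) + - k1 / (k2 - k1) = 1" .
  qed
  ultimately have muaff: "\<mu> \<in> affine hull F" by simp
  have "F = belief_simplex"
  proof (rule ccontr)
    assume "F \<noteq> belief_simplex"
    then have "affine hull F \<inter> rel_interior belief_simplex = {}"
      using affine_hull_face_of_disjoint_rel_interior[OF convex_simplex F] by blast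
    then show False using muaff mu by blast
  qed
  then have SL: "belief_simplex \<subseteq> L" using FL by simp
  obtain i j k :: 'n where ijk: "i \<noteq> j" "j \<noteq> k" "i \<noteq> k" using three_idx[OF card] by blast
  obtain a1 where a1: "axis i 1 - \<mu> = a1 *\<^sub>R (x0 - \<mu>)" using SL axis_simplex unfolding L_def by blast
  obtain a2 where a2: "axis j 1 - \<mu> = a2 *\<^sub>R (x0 - \<mu>)" using SL axis_simplex unfolding L_def by blast
  obtain a3 where a3: "axis k 1 - \<mu> = a3 *\<^sub>R (x0 - \<mu>)" using SL axis_simplex unfolding L_def by blast
  have e12: "axis i 1 - axis j 1 = (a1 - a2) *\<^sub>R (x0 - \<mu>)"
  proof -
    have "axis i 1 - axis j 1 = (axis i 1 - \<mu>) - (axis j 1 - \<mu>)" by simp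
    also have "\<dots> = (a1 - a2) *\<^sub>R (x0 - \<mu>)" unfolding a1 a2 by (simp add: scaleR_diff_left)
    finally show ?thesis .
  qed
  have e13: "axis i 1 - axis k 1 = (a1 - a3) *\<^sub>R (x0 - \<mu>)"
  proof -
    have "axis i 1 - axis k 1 = (axis i 1 - \<mu>) - (axis k 1 - \<mu>)" by simp
    also have "\<dots> = (a1 - a3) *\<^sub>R (x0 - \<mu>)" unfolding a1 a3 by (simp add: scaleR_diff_left)
    finally show ?thesis .
  qed
  have c1: "(a1 - a2) * (x0 - \<mu>) $ j = -1" using arg_cong[OF e12, of "\<lambda>v. v $ j"] ijk by (simp add: axis_def)
  have c2: "(a1 - a3) * (x0 - \<mu>) $ j = 0" using arg_cong[OF e13, of "\<lambda>v. v $ j"] ijk by (simp add: axis_def)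
  have "(x0 - \<mu>) $ j \<noteq> 0" using c1 by auto
  then have "a1 = a3" using c2 by simp
  then have "(axis i 1 - axis k 1 :: real ^ 'n) $ i = 0" using e13 by simp
  then show False using ijk by (simp add: axis_def)
qed



theorem proposition2:
  fixes \<mu> :: "real ^ 'n::finite"
    and \<phi> :: "real ^ 'n \<Rightarrow> real ^ 'n"
  assumes "CARD('n) \<ge> 3"
    and "\<mu> \<in> rel_interior belief_simplex"
    and "\<forall>x\<in>belief_simplex. \<phi> x \<in> belief_simplex"
    and "respects_blackwell \<mu> \<phi>"
    and "produces_contractive_error \<mu> \<phi>"
    and "\<not> produces_expansive_error \<mu> \<phi>"
  shows "occasionally_stubborn \<phi>"
proof -
  note card = assms(1) and muri = assms(2) and RB = assms(4)
  have mu: "\<mu> \<in> belief_simplex" using muri rel_interior_subset by blast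
  have pos: "\<forall>\<theta>. \<mu> $ \<theta> > 0" by (rule mu_pos[OF muri])
  have noexp: "\<forall>x\<in>belief_simplex. \<phi> x \<in> closed_segment x \<mu>"
    using assms(6) unfolding produces_expansive_error_def expansive_error_at_def by blast
  have phimu: "\<phi> \<mu> = \<mu>" using noexp mu by auto
  have core: "\<forall>y\<in>rel_interior S. \<phi> y = \<mu>" if S: "S \<in> S_hat \<phi>" and dim: "aff_dim S \<ge> 1" for S
  proof
    fix y assume y: "y \<in> rel_interior S"
    have F: "S face_of belief_simplex" using S unfolding S_hat_def by blast
    obtain x0 where x0: "x0 \<in> S" "\<phi> x0 \<noteq> x0" using S unfolding S_hat_def by blast
    have SS: "S \<subseteq> belief_simplex" using face_of_imp_subset[OF F] .
    have x0mu: "x0 \<noteq> \<mu>" using x0 phimu by auto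
    obtain y1 where y1: "y1 \<in> rel_interior S" "\<forall>k. y1 - \<mu> \<noteq> k *\<^sub>R (x0 - \<mu>)"
      using ex_ncol[OF card muri F dim x0(1) x0mu] by blast
    have py1: "\<phi> y1 = \<mu>" by (rule key[OF pos mu RB noexp SS x0(1) y1(1) x0(2) y1(2)])
    show "\<phi> y = \<mu>"
    proof (cases "\<forall>k. y - \<mu> \<noteq> k *\<^sub>R (x0 - \<mu>)")
      case True
      then show ?thesis by (rule key[OF pos mu RB noexp SS x0(1) y x0(2)])
    next
      case False
      then obtain k where k: "y - \<mu> = k *\<^sub>R (x0 - \<mu>)" by blast
      show ?thesis
      proof (cases "y = \<mu>")
        case True then show ?thesis using phimu by simp
      next
        case ymu: False
        have y1S: "y1 \<in> S" using y1(1) rel_interior_subset by blast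
        have y1mu: "y1 \<noteq> \<mu>" using y1(2)[rule_format, of 0] by auto
        have nf: "\<phi> y1 \<noteq> y1" using py1 y1mu by simp
        have k0: "k \<noteq> 0" using k ymu by auto
        have ncol: "\<forall>k'. y - \<mu> \<noteq> k' *\<^sub>R (y1 - \<mu>)"
        proof (intro allI notI)
          fix k' assume k': "y - \<mu> = k' *\<^sub>R (y1 - \<mu>)"
          have k'0: "k' \<noteq> 0" using k' ymu by auto
          have "k' *\<^sub>R (y1 - \<mu>) = k *\<^sub>R (x0 - \<mu>)" using k k' by simp
          then have "(1 / k') *\<^sub>R (k' *\<^sub>R (y1 - \<mu>)) = (1 / k') *\<^sub>R (k *\<^sub>R (x0 - \<mu>))" by simp
          then have "y1 - \<mu> = (k / k') *\<^sub>R (x0 - \<mu>)" using k'0 by simp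
          then show False using y1(2) by blast
        qed
        show ?thesis by (rule key[OF pos mu RB noexp SS y1S y nf ncol])
      qed
    qed
  qed
  obtain x where "x \<in> belief_simplex" "contractive_error_at \<mu> \<phi> x"
    using assms(5) unfolding produces_contractive_error_def by blast
  then have notid: "\<not> (\<forall>x\<in>belief_simplex. \<phi> x = x)" unfolding contractive_error_at_def by blast
  have "\<exists>xs\<in>belief_simplex.
        (\<forall>S\<in>S_hat \<phi>. aff_dim S \<ge> 2 \<longrightarrow> (\<forall>x\<in>rel_interior S. \<phi> x = xs)) \<and>
        (\<forall>S\<in>S_hat \<phi>. aff_dim S = 1 \<longrightarrow>
           (\<forall>x\<in>rel_interior S. \<phi> x = xs) \<or>
           (xs \<in> rel_interior S \<and>
            (\<exists>e'. e' extreme_point_of S \<and>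
                  (\<forall>x\<in>open_segment e' xs. \<phi> x = xs) \<and>
                  (\<forall>x\<in>S - open_segment e' xs. \<phi> x = x)))) \<and>
        (\<forall>e\<in>E_hat \<phi>. \<phi> e \<in> closed_segment xs e)"
  proof (intro bexI[of _ \<mu>] conjI)
    show "\<mu> \<in> belief_simplex" by (rule mu)
    show "\<forall>S\<in>S_hat \<phi>. aff_dim S \<ge> 2 \<longrightarrow> (\<forall>x\<in>rel_interior S. \<phi> x = \<mu>)"
      using core by auto
    show "\<forall>S\<in>S_hat \<phi>. aff_dim S = 1 \<longrightarrow>
           (\<forall>x\<in>rel_interior S. \<phi> x = \<mu>) \<or>
           (\<mu> \<in> rel_interior S \<and>
            (\<exists>e'. e' extreme_point_of S \<and>
                  (\<forall>x\<in>open_segment e' \<mu>. \<phi> x = \<mu>) \<and>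
                  (\<forall>x\<in>S - open_segment e' \<mu>. \<phi> x = x)))"
      using core by auto
    show "\<forall>e\<in>E_hat \<phi>. \<phi> e \<in> closed_segment \<mu> e"
    proof
      fix e assume "e \<in> E_hat \<phi>"
      then have "e \<in> belief_simplex" unfolding E_hat_def extreme_point_of_def by blast
      then have "\<phi> e \<in> closed_segment e \<mu>" using noexp by blast
      then show "\<phi> e \<in> closed_segment \<mu> e" by (simp add: closed_segment_commute)
    qed
  qed
  then show ?thesis unfolding occasionally_stubborn_def by blast
qed

end
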